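(* Let $\mathcal{H}$ be an instance of $r$-Hypergraph Label Cover ($r\geq 2$), let $\mathcal{S}$ be an $(r,|C|,2)$-vector system, and let $G$ be the graph with vector costs obtained from $\mathcal{H}$ and $\mathcal{S}$ by the basic reduction (with $p=2$). (a) If some assignment satisfies all hyperedges of $\mathcal{H}$, then $G$ has an $s$-$t$ path $P$ with $\|\mathrm{cost}(P)\|_2^2=1$. (b) If every assignment weakly satisfies at most an $\varepsilon$-fraction of the hyperedges, then every $s$-$t$ path $P$ in $G$ satisfies $\|\mathrm{cost}(P)\|_2^2\geq 2-(1/r+2\varepsilon)$. (Norms are the scaled norms defined below.)
   Context: $r$-Hypergraph Label Cover: an $r$-partite hypergraph $\mathcal{H}=(V,\mathcal{E})$, $V=V_1\cup\dots\cup V_r$, each hyperedge containing exactly one vertex of each $V_j$; label set $L$; color set $C$; maps $\pi_h^u:L\to C$ for $h\in\mathcal{E}$, $u\in h$. For an assignment $\sigma:V\to L$, the color of $u$ in $h$ is $\pi_h^u(\sigma(u))$; $\sigma$ satisfies $h$ if all vertices of $h$ have the same color in $h$, and weakly satisfies $h$ if two distinct vertices of $h$ have the same color in $h$. Multilinear product: $\langle u_1,\dots,u_p\rangle=\sum_j\prod_i u_i(j)$. An $(r,q,p)$-vector system is a collection $\{v_j^c: j\in[r], c\in[q]\}$ of $rq$ distinct vectors in $\mathbb{R}^{d_0}$ (color of $v_j^c$ is $c$) such that for any $u_1,\dots,u_p$ from it (repetitions allowed), $\langle u_1,\dots,u_p\rangle=0$ if two distinct vectors in the list share a color, and otherwise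 $\langle u_1,\dots,u_p\rangle=r^{-t}$ with $t$ the number of distinct vectors in the list. Here colors are identified with $C$. Basic reduction: let $m=|\mathcal{E}|$ and $\mathcal{S}=\{v_j^c\}$ an $(r,|C|,p)$-vector system in $\mathbb{R}^{d_0}$. For each $u\in V$ create a block of $|L|$ parallel edges $e(u,l)$, $l\in L$, and compose all blocks in series (in arbitrary order) between $s$ and $t$; $s$-$t$ paths correspond bijectively to assignments via $P_\sigma=\{e(u,\sigma(u)):u\in V\}$. Costs lie in $\mathbb{R}^{d_0m}=\bigoplus_{h\in\mathcal{E}}\mathbb{R}^{d_0}$: $c(e(u,l))=\bigoplus_h c^h(e(u,l))$ with $c^h(e(u,l))=v_j^{\pi_h^u(l)}$ if $u\in h$ and $u\in V_j$, and $c^h(e(u,l))=0$ if $u\notin h$. $\mathrm{cost}(P)=\sum_{e\in P}c(e)$. On $\mathbb{R}^{d_0m}$ we use the scaled norm $\|x\|_p^p=\frac{1}{m}\sum_i|x_i|^p$. *)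

theory Defs
  imports "HOL-Analysis.Analysis"
begin

text \<open>Vertices V (finite), prt u gives
  the index j with u \<in> V_j. Hyperedges are indexed by a finite set E; vert h j is the unique
  vertex of hyperedge h lying in V_j. proj h u l is the projection map pi_h^u : L \<rightarrow> C.\<close>

definition hlc_instance ::
  "nat \<Rightarrow> 'v set \<Rightarrow> ('v \<Rightarrow> nat) \<Rightarrow> 'e set \<Rightarrow> ('e \<Rightarrow> nat \<Rightarrow> 'v)
   \<Rightarrow> 'l set \<Rightarrow> 'c set \<Rightarrow> ('e \<Rightarrow> 'v \<Rightarrow> 'l \<Rightarrow> 'c) \<Rightarrow> bool" where
  "hlc_instance r V prt E vert L C proj \<longleftrightarrow>
     finite V \<and> finite E \<and> finite L \<and> finite C \<and>
     (\<forall>u\<in>V. prt u < r) \<and>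
     (\<forall>h\<in>E. \<forall>j<r. vert h j \<in> V \<and> prt (vert h j) = j) \<and>
     (\<forall>h\<in>E. \<forall>j<r. \<forall>l\<in>L. proj h (vert h j) l \<in> C)"

definition in_hedge :: "nat \<Rightarrow> ('e \<Rightarrow> nat \<Rightarrow> 'v) \<Rightarrow> 'v \<Rightarrow> 'e \<Rightarrow> bool" where
  "in_hedge r vert u h \<longleftrightarrow> (\<exists>j<r. vert h j = u)"

definition assignment :: "'v set \<Rightarrow> 'l set \<Rightarrow> ('v \<Rightarrow> 'l) \<Rightarrow> bool" where
  "assignment V L \<sigma> \<longleftrightarrow> (\<forall>u\<in>V. \<sigma> u \<in> L)"

definition satisfies ::
  "nat \<Rightarrow> ('e \<Rightarrow> nat \<Rightarrow> 'v) \<Rightarrow> ('e \<Rightarrow> 'v \<Rightarrow> 'l \<Rightarrow> 'c) \<Rightarrow> ('v \<Rightarrow> 'l) \<Rightarrow> 'e \<Rightarrow> bool" where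
  "satisfies r vert proj \<sigma> h \<longleftrightarrow>
     (\<forall>j<r. \<forall>k<r. proj h (vert h j) (\<sigma> (vert h j)) = proj h (vert h k) (\<sigma> (vert h k)))"

definition weakly_satisfies ::
  "nat \<Rightarrow> ('e \<Rightarrow> nat \<Rightarrow> 'v) \<Rightarrow> ('e \<Rightarrow> 'v \<Rightarrow> 'l \<Rightarrow> 'c) \<Rightarrow> ('v \<Rightarrow> 'l) \<Rightarrow> 'e \<Rightarrow> bool" where
  "weakly_satisfies r vert proj \<sigma> h \<longleftrightarrow>
     (\<exists>j<r. \<exists>k<r. j \<noteq> k \<and> proj h (vert h j) (\<sigma> (vert h j)) = proj h (vert h k) (\<sigma> (vert h k)))"

definition mlprod :: "(real^'d) list \<Rightarrow> real" where
  "mlprod us = (\<Sum>i\<in>UNIV. prod_list (map (\<lambda>u. u $ i) us))"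

text \<open>(r,|C|,p)-vector system: vectors vs j c (j < r, c \<in> C) in R^d0, pairwise distinct,
  colour of vs j c is c.\<close>
definition vector_system :: "nat \<Rightarrow> 'c set \<Rightarrow> nat \<Rightarrow> (nat \<Rightarrow> 'c \<Rightarrow> real^'d) \<Rightarrow> bool" where
  "vector_system r C p vs \<longleftrightarrow>
     inj_on (\<lambda>(j, c). vs j c) ({..<r} \<times> C) \<and>
     (\<forall>xs. length xs = p \<and> set xs \<subseteq> {..<r} \<times> C \<longrightarrow>
        mlprod (map (\<lambda>(j, c). vs j c) xs) =
          (if \<exists>a\<in>set xs. \<exists>b\<in>set xs. a \<noteq> b \<and> snd a = snd b then 0
           else 1 / real r ^ card (set xs)))"

text \<open>Edges are pairs (u,l) standing for e(u,l). The graph is the series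
  composition of parallel blocks {e(u,l) : l \<in> L}, u \<in> V, so its s-t paths (as edge sets) are
  exactly the sets containing exactly one edge from each block.\<close>
definition st_path :: "'v set \<Rightarrow> 'l set \<Rightarrow> ('v \<times> 'l) set \<Rightarrow> bool" where
  "st_path V L P \<longleftrightarrow> P \<subseteq> V \<times> L \<and> (\<forall>u\<in>V. \<exists>!l. (u, l) \<in> P)"

text \<open>Cost vector of an edge, an element of the direct sum over hyperedges of R^d0,
  represented as a function 'e \<Rightarrow> real^'d (only h \<in> E matter).\<close>
definition edge_cost ::
  "nat \<Rightarrow> ('v \<Rightarrow> nat) \<Rightarrow> ('e \<Rightarrow> nat \<Rightarrow> 'v) \<Rightarrow> ('e \<Rightarrow> 'v \<Rightarrow> 'l \<Rightarrow> 'c)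
   \<Rightarrow> (nat \<Rightarrow> 'c \<Rightarrow> real^'d) \<Rightarrow> 'v \<times> 'l \<Rightarrow> 'e \<Rightarrow> real^'d" where
  "edge_cost r prt vert proj vs e h =
     (if in_hedge r vert (fst e) h then vs (prt (fst e)) (proj h (fst e) (snd e)) else 0)"

definition path_cost ::
  "nat \<Rightarrow> ('v \<Rightarrow> nat) \<Rightarrow> ('e \<Rightarrow> nat \<Rightarrow> 'v) \<Rightarrow> ('e \<Rightarrow> 'v \<Rightarrow> 'l \<Rightarrow> 'c)
   \<Rightarrow> (nat \<Rightarrow> 'c \<Rightarrow> real^'d) \<Rightarrow> ('v \<times> 'l) set \<Rightarrow> 'e \<Rightarrow> real^'d" where
  "path_cost r prt vert proj vs P = (\<lambda>h. \<Sum>e\<in>P. edge_cost r prt vert proj vs e h)"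

definition scaled_norm :: "real \<Rightarrow> 'e set \<Rightarrow> ('e \<Rightarrow> real^'d) \<Rightarrow> real" where
  "scaled_norm p E x =
     ((1 / real (card E)) * (\<Sum>h\<in>E. \<Sum>i\<in>UNIV. \<bar>x h $ i\<bar> powr p)) powr (1 / p)"

end

theory Submission
  imports Defs
begin

lemma sq_norm:
  fixes x :: "'e \<Rightarrow> real^'d"
  shows "(scaled_norm 2 E x)\<^sup>2 = (1 / real (card E)) * (\<Sum>h\<in>E. \<Sum>i\<in>UNIV. (x h $ i)\<^sup>2)"
proof -
  have a: "\<bar>a\<bar> powr 2 = a\<^sup>2" for a :: real
    by (cases "a = 0") (auto simp: powr_numeral)
  have nn: "0 \<le> (1 / real (card E)) * (\<Sum>h\<in>E. \<Sum>i\<in>UNIV. (x h $ i)\<^sup>2)"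
    by (intro mult_nonneg_nonneg sum_nonneg) auto
  show ?thesis unfolding scaled_norm_def a
    using nn by (simp add: powr_half_sqrt)
qed

lemma path_cost_eq:
  assumes hlc: "hlc_instance r V prt E vert L C proj"
    and P: "st_path V L P" and \<sigma>: "\<forall>u\<in>V. (u, \<sigma> u) \<in> P" and h: "h \<in> E"
  shows "path_cost r prt vert proj vs P h =
           (\<Sum>j<r. vs j (proj h (vert h j) (\<sigma> (vert h j))))"
proof -
  have finP: "finite P" using P hlc unfolding st_path_def hlc_instance_def
    by (meson finite_SigmaI rev_finite_subset)
  have vh: "\<And>j. j < r \<Longrightarrow> vert h j \<in> V \<and> prt (vert h j) = j"
    using hlc h unfolding hlc_instance_def by blast
  have ec: "edge_cost r prt vert proj vs e h =
        (\<Sum>j<r. if fst e = vert h j then vs j (proj h (fst e) (snd e)) else 0)" for e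
  proof (cases "in_hedge r vert (fst e) h")
    case True
    then obtain j0 where j0: "j0 < r" "vert h j0 = fst e" unfolding in_hedge_def by blast
    have "(fst e = vert h j) = (j = j0)" if "j < r" for j
      using vh[OF that] vh[OF j0(1)] j0 by metis
    then have "(\<Sum>j<r. if fst e = vert h j then vs j (proj h (fst e) (snd e)) else 0)
        = (\<Sum>j<r. if j = j0 then vs j (proj h (fst e) (snd e)) else 0)"
      by (intro sum.cong) auto
    also have "\<dots> = vs j0 (proj h (fst e) (snd e))" using j0 by simp
    finally show ?thesis using True j0 vh[OF j0(1)] unfolding edge_cost_def by simp
  next
    case False
    then have "\<And>j. j < r \<Longrightarrow> fst e \<noteq> vert h j" unfolding in_hedge_def by (metis)
    then show ?thesis using False unfolding edge_cost_def by simp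
  qed
  have "path_cost r prt vert proj vs P h =
      (\<Sum>e\<in>P. \<Sum>j<r. if fst e = vert h j then vs j (proj h (fst e) (snd e)) else 0)"
    unfolding path_cost_def using ec by simp
  also have "\<dots> = (\<Sum>j<r. \<Sum>e\<in>P. if fst e = vert h j then vs j (proj h (fst e) (snd e)) else 0)"
    by (rule sum.swap)
  also have "\<dots> = (\<Sum>j<r. vs j (proj h (vert h j) (\<sigma> (vert h j))))"
  proof (rule sum.cong[OF refl])
    fix j assume "j \<in> {..<r}"
    then have j: "vert h j \<in> V" using vh by auto
    have "(\<Sum>e\<in>P. if fst e = vert h j then vs j (proj h (fst e) (snd e)) else 0)
       = (\<Sum>e\<in>P. if e = (vert h j, \<sigma> (vert h j)) then vs j (proj h (fst e) (snd e)) else 0)"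
    proof (rule sum.cong[OF refl])
      fix e assume e: "e \<in> P"
      have "fst e = vert h j \<longleftrightarrow> e = (vert h j, \<sigma> (vert h j))"
        using P e \<sigma> j unfolding st_path_def by (metis prod.collapse fst_conv)
      then show "(if fst e = vert h j then vs j (proj h (fst e) (snd e)) else 0) =
        (if e = (vert h j, \<sigma> (vert h j)) then vs j (proj h (fst e) (snd e)) else 0)" by simp
    qed
    also have "\<dots> = vs j (proj h (vert h j) (\<sigma> (vert h j)))"
      using finP \<sigma> j by (simp add: sum.delta')
    finally show "(\<Sum>e\<in>P. if fst e = vert h j then vs j (proj h (fst e) (snd e)) else 0)
        = vs j (proj h (vert h j) (\<sigma> (vert h j)))" .
  qed
  finally show ?thesis .
qed

lemma sq_sum:
  fixes v :: "nat \<Rightarrow> real^'d"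
  shows "(\<Sum>i\<in>UNIV. ((\<Sum>j<r. v j) $ i)\<^sup>2) = (\<Sum>j<r. \<Sum>k<r. mlprod [v j, v k])"
proof -
  have "(\<Sum>i\<in>UNIV. ((\<Sum>j<r. v j) $ i)\<^sup>2) = (\<Sum>i\<in>UNIV. \<Sum>j<r. \<Sum>k<r. v j $ i * v k $ i)"
    by (simp add: power2_eq_square sum_component sum_product)
  also have "\<dots> = (\<Sum>j<r. \<Sum>i\<in>UNIV. \<Sum>k<r. v j $ i * v k $ i)" by (rule sum.swap)
  also have "\<dots> = (\<Sum>j<r. \<Sum>k<r. \<Sum>i\<in>UNIV. v j $ i * v k $ i)"
    by (intro sum.cong refl sum.swap)
  finally show ?thesis by (simp add: mlprod_def)
qed

lemma ml_val:
  assumes vsys: "vector_system r C 2 vs" and j: "j < r" "k < r" and c: "c j \<in> C" "c k \<in> C"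
  shows "mlprod [vs j (c j), vs k (c k)] =
     (if j = k then 1 / real r else if c j = c k then 0 else 1 / (real r)\<^sup>2)"
proof -
  have "mlprod (map (\<lambda>(j, c). vs j c) [(j, c j), (k, c k)]) =
          (if \<exists>a\<in>set [(j, c j), (k, c k)]. \<exists>b\<in>set [(j, c j), (k, c k)]. a \<noteq> b \<and> snd a = snd b then 0
           else 1 / real r ^ card (set [(j, c j), (k, c k)]))"
    using vsys j c unfolding vector_system_def by (intro conjunct2[OF vsys[unfolded vector_system_def], rule_format]) auto
  then show ?thesis by (cases "j = k") (auto simp: power2_eq_square)
qed

lemma sum_if_diag:
  assumes "j < r"
  shows "(\<Sum>k<r. if j = k then a else b) = a + (real r - 1) * (b::real)"
proof -
  have "(\<Sum>k<r. if j = k then a else b) = (\<Sum>k<r. b + (if j = k then a - b else 0))"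
    by (intro sum.cong) auto
  also have "\<dots> = real r * b + (a - b)" using assms by (simp add: sum.distrib)
  finally show ?thesis by (simp add: algebra_simps)
qed

lemma Q_eq:
  assumes hlc: "hlc_instance r V prt E vert L C proj" and vsys: "vector_system r C 2 vs"
    and P: "st_path V L P" and \<sigma>: "\<forall>u\<in>V. (u, \<sigma> u) \<in> P" and h: "h \<in> E"
  shows "(\<Sum>i\<in>UNIV. (path_cost r prt vert proj vs P h $ i)\<^sup>2) =
    (\<Sum>j<r. \<Sum>k<r. if j = k then 1 / real r else
        if proj h (vert h j) (\<sigma> (vert h j)) = proj h (vert h k) (\<sigma> (vert h k)) then 0
        else 1 / (real r)\<^sup>2)"
proof -
  define c where "c = (\<lambda>j. proj h (vert h j) (\<sigma> (vert h j)))"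
  have cC: "c j \<in> C" if "j < r" for j
  proof -
    have "vert h j \<in> V" using hlc h that unfolding hlc_instance_def by blast
    then have "\<sigma> (vert h j) \<in> L" using \<sigma> P unfolding st_path_def by blast
    then show ?thesis using hlc h that unfolding hlc_instance_def c_def by blast
  qed
  have "(\<Sum>i\<in>UNIV. (path_cost r prt vert proj vs P h $ i)\<^sup>2) =
      (\<Sum>j<r. \<Sum>k<r. mlprod [vs j (c j), vs k (c k)])"
    unfolding path_cost_eq[OF hlc P \<sigma> h] c_def by (rule sq_sum)
  also have "\<dots> = (\<Sum>j<r. \<Sum>k<r. if j = k then 1 / real r else
        if c j = c k then 0 else 1 / (real r)\<^sup>2)"
  proof (intro sum.cong refl)
    fix j k assume "j \<in> {..<r}" "k \<in> {..<r}"
    then show "mlprod [vs j (c j), vs k (c k)] = (if j = k then 1 / real r else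
        if c j = c k then 0 else 1 / (real r)\<^sup>2)"
      using ml_val[of r C vs j k c] vsys cC by auto
  qed
  finally show ?thesis unfolding c_def .
qed

theorem lemma4p1:
  fixes r :: nat and V :: "'v set" and prt :: "'v \<Rightarrow> nat"
    and E :: "'e set" and vert :: "'e \<Rightarrow> nat \<Rightarrow> 'v"
    and L :: "'l set" and C :: "'c set" and proj :: "'e \<Rightarrow> 'v \<Rightarrow> 'l \<Rightarrow> 'c"
    and vs :: "nat \<Rightarrow> 'c \<Rightarrow> real^'d" and \<epsilon> :: real
  assumes "r \<ge> 2"
    and "hlc_instance r V prt E vert L C proj"
    and "E \<noteq> {}"
    and "vector_system r C 2 vs"
  shows "((\<exists>\<sigma>. assignment V L \<sigma> \<and> (\<forall>h\<in>E. satisfies r vert proj \<sigma> h)) \<longrightarrow>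
           (\<exists>P. st_path V L P \<and> (scaled_norm 2 E (path_cost r prt vert proj vs P))\<^sup>2 = 1))
       \<and> ((\<forall>\<sigma>. assignment V L \<sigma> \<longrightarrow>
              real (card {h\<in>E. weakly_satisfies r vert proj \<sigma> h}) \<le> \<epsilon> * real (card E)) \<longrightarrow>
           (\<forall>P. st_path V L P \<longrightarrow>
              (scaled_norm 2 E (path_cost r prt vert proj vs P))\<^sup>2 \<ge> 2 - (1 / real r + 2 * \<epsilon>)))"
proof (intro conjI impI allI)
  assume "\<exists>\<sigma>. assignment V L \<sigma> \<and> (\<forall>h\<in>E. satisfies r vert proj \<sigma> h)"
  then obtain \<sigma> where a: "assignment V L \<sigma>" and s: "\<forall>h\<in>E. satisfies r vert proj \<sigma> h" by blast
  define P where "P = (\<lambda>u. (u, \<sigma> u)) ` V"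
  have P: "st_path V L P" using a unfolding P_def st_path_def assignment_def by auto
  have \<sigma>: "\<forall>u\<in>V. (u, \<sigma> u) \<in> P" unfolding P_def by auto
  have "(\<Sum>i\<in>UNIV. (path_cost r prt vert proj vs P h $ i)\<^sup>2) = 1" if h: "h \<in> E" for h
  proof -
    have "(\<Sum>i\<in>UNIV. (path_cost r prt vert proj vs P h $ i)\<^sup>2) =
      (\<Sum>j<r. \<Sum>k<r. if j = k then 1 / real r else 0)"
      unfolding Q_eq[OF assms(2,4) P \<sigma> h]
    proof (intro sum.cong refl)
      fix j k assume jk: "j \<in> {..<r}" "k \<in> {..<r}"
      then have "proj h (vert h j) (\<sigma> (vert h j)) = proj h (vert h k) (\<sigma> (vert h k))"
        using s h unfolding satisfies_def by blast
      then show "(if j = k then 1 / real r else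
        if proj h (vert h j) (\<sigma> (vert h j)) = proj h (vert h k) (\<sigma> (vert h k)) then 0
        else 1 / (real r)\<^sup>2) = (if j = k then 1 / real r else 0)" by simp
    qed
    also have "\<dots> = 1" using assms(1) by simp
    finally show ?thesis .
  qed
  then have "(scaled_norm 2 E (path_cost r prt vert proj vs P))\<^sup>2 = 1"
    unfolding sq_norm using assms(2,3) unfolding hlc_instance_def by simp
  then show "\<exists>P. st_path V L P \<and> (scaled_norm 2 E (path_cost r prt vert proj vs P))\<^sup>2 = 1"
    using P by blast
next
  fix P
  assume H: "\<forall>\<sigma>. assignment V L \<sigma> \<longrightarrow>
              real (card {h\<in>E. weakly_satisfies r vert proj \<sigma> h}) \<le> \<epsilon> * real (card E)"
    and P: "st_path V L P"
  define \<sigma> where "\<sigma> = (\<lambda>u. THE l. (u, l) \<in> P)"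
  have \<sigma>: "\<forall>u\<in>V. (u, \<sigma> u) \<in> P"
  proof
    fix u assume "u \<in> V"
    then have "\<exists>!l. (u, l) \<in> P" using P unfolding st_path_def by blast
    then show "(u, \<sigma> u) \<in> P" unfolding \<sigma>_def by (rule theI')
  qed
  have a: "assignment V L \<sigma>" using \<sigma> P unfolding assignment_def st_path_def by blast
  define W where "W = {h\<in>E. weakly_satisfies r vert proj \<sigma> h}"
  have finE: "finite E" and cE: "card E > 0" using assms(2,3) unfolding hlc_instance_def
    by (auto simp: card_gt_0_iff)
  have r0: "real r \<ge> 2" using assms(1) by simp
  have Wle: "real (card W) \<le> \<epsilon> * real (card E)" using H a unfolding W_def by blast
  have eps: "\<epsilon> \<ge> 0"
  proof -
    have "0 \<le> \<epsilon> * real (card E)" using Wle of_nat_0_le_iff order_trans by blast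
    then show ?thesis using cE by (simp add: zero_le_mult_iff)
  qed
  have lb: "(\<Sum>i\<in>UNIV. (path_cost r prt vert proj vs P h $ i)\<^sup>2) \<ge>
      2 - 1 / real r - (if h \<in> W then 1 else 0)" if h: "h \<in> E" for h
  proof (cases "h \<in> W")
    case True
    have "(\<Sum>j<r. \<Sum>k<r. if j = k then 1 / real r else (0::real)) \<le>
      (\<Sum>j<r. \<Sum>k<r. if j = k then 1 / real r else
        if proj h (vert h j) (\<sigma> (vert h j)) = proj h (vert h k) (\<sigma> (vert h k)) then 0
        else 1 / (real r)\<^sup>2)"
      by (intro sum_mono) auto
    moreover have "(\<Sum>j<r. \<Sum>k<r. if j = k then 1 / real r else (0::real)) = 1"
      using assms(1) by simp
    moreover have "0 \<le> 1 / real r" by simp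
    ultimately show ?thesis unfolding Q_eq[OF assms(2,4) P \<sigma> h] using True by simp (smt (verit) of_nat_0_le_iff divide_nonneg_nonneg zero_le_one)
  next
    case False
    then have nw: "\<not> weakly_satisfies r vert proj \<sigma> h" using h unfolding W_def by blast
    have "(\<Sum>i\<in>UNIV. (path_cost r prt vert proj vs P h $ i)\<^sup>2) =
      (\<Sum>j<r. \<Sum>k<r. if j = k then 1 / real r else 1 / (real r)\<^sup>2)"
      unfolding Q_eq[OF assms(2,4) P \<sigma> h]
    proof (intro sum.cong refl)
      fix j k assume jk: "j \<in> {..<r}" "k \<in> {..<r}"
      then have "j \<noteq> k \<Longrightarrow> proj h (vert h j) (\<sigma> (vert h j)) \<noteq> proj h (vert h k) (\<sigma> (vert h k))"
        using nw unfolding weakly_satisfies_def by blast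
      then show "(if j = k then 1 / real r else
        if proj h (vert h j) (\<sigma> (vert h j)) = proj h (vert h k) (\<sigma> (vert h k)) then 0
        else 1 / (real r)\<^sup>2) = (if j = k then 1 / real r else 1 / (real r)\<^sup>2)" by simp
    qed
    also have "\<dots> = (\<Sum>j<r. 1 / real r + (real r - 1) * (1 / (real r)\<^sup>2))"
      by (intro sum.cong refl sum_if_diag) auto
    also have "\<dots> = 2 - 1 / real r" using r0 by (simp add: field_simps power2_eq_square)
    finally show ?thesis using False by simp
  qed
  have "(\<Sum>h\<in>E. 2 - 1 / real r - (if h \<in> W then 1 else 0)) \<le>
      (\<Sum>h\<in>E. \<Sum>i\<in>UNIV. (path_cost r prt vert proj vs P h $ i)\<^sup>2)"
    using lb by (rule sum_mono)
  moreover have "(\<Sum>h\<in>E. 2 - 1 / real r - (if h \<in> W then 1 else 0)) =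
      real (card E) * (2 - 1 / real r) - real (card W)"
  proof -
    have "(\<Sum>h\<in>E. (if h \<in> W then 1 else 0)) = real (card W)"
      using finE unfolding W_def by (simp add: sum.If_cases Int_def)
    then show ?thesis by (simp add: sum_subtractf)
  qed
  ultimately have S: "real (card E) * (2 - 1 / real r - \<epsilon>) \<le>
      (\<Sum>h\<in>E. \<Sum>i\<in>UNIV. (path_cost r prt vert proj vs P h $ i)\<^sup>2)"
    using Wle by (simp add: algebra_simps)
  have "2 - (1 / real r + 2 * \<epsilon>) \<le> 2 - 1 / real r - \<epsilon>" using eps by simp
  also have "\<dots> \<le> (1 / real (card E)) * (\<Sum>h\<in>E. \<Sum>i\<in>UNIV. (path_cost r prt vert proj vs P h $ i)\<^sup>2)"
  proof -
    have "2 - 1 / real r - \<epsilon> = (real (card E) * (2 - 1 / real r - \<epsilon>)) / real (card E)"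
      using cE by simp
    also have "\<dots> \<le> (\<Sum>h\<in>E. \<Sum>i\<in>UNIV. (path_cost r prt vert proj vs P h $ i)\<^sup>2) / real (card E)"
      using S cE by (intro divide_right_mono) auto
    finally show ?thesis by simp
  qed
  finally show "(scaled_norm 2 E (path_cost r prt vert proj vs P))\<^sup>2 \<ge> 2 - (1 / real r + 2 * \<epsilon>)"
    unfolding sq_norm .
qed

end
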